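(* Let $\epsilon>0$, let $u\in\mathbb{R}^d$ with $\|u\|_2=1$ be an unknown utility vector, $\mathrm{util}(x)=u^Tx$, and let $D\subseteq\mathbb{R}^d$ be a finite set of tuples with $\|x\|_2\le1$, no two having the same utility. Run the streaming algorithm described in the context (with any parameters $m\ge 1$, $\gamma$) on $D$ in random order, and suppose the stream is terminated at an arbitrary moment, after which the algorithm performs its final step on the tuples that have arrived. Let $D'$ be the set of tuples that have arrived, $x^*=\arg\max_{x\in D'}\mathrm{util}(x)$, and assume $c:=\mathrm{util}(x^* )\ge 0$. Then the returned tuple $x'\in D'$ satisfies $\mathrm{util}(x^* )-\mathrm{util}(x')\le(\epsilon/c)\,\mathrm{util}(x^* )$, i.e. it is an $\epsilon/c$-regret tuple among $D'$.
   Context: Oracle: given two tuples, a comparison oracle returns the one with larger utility; the algorithm accesses $u$ only through it. Filter: a filter holds a set $S$ of tuples sorted by utility via oracle comparisons, $S=\{x_1,\dots,x_s\}$ with $\mathrm{util}(x_1)>\dots>\mathrm{util}(x_s)$. Write $S\vdash x$ if $\min_{\alpha_1,\dots,\alpha_{s-1}\ge 0}\big\|x-x_1-\sum_{j=1}^{s-1}\alpha_j(x_{j+1}-x_j)\big\|_2\le\epsilon$. The filter prunes $x$ iff $S\vdash x$ (an empty filter prunes nothing); add$(x)$ inserts $x$ into $S$; best returns $x_1$. Algorithm: start with an empty filter $F$, empty sequence $\Sigma$ of filters, empty pool $P$. For each arriving $x$: if some filter in $\Sigma$ prunes $x$, skip it; else if $|P|<m$, add $x$ to $P$; else add $x$ to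 $F$, let $P'=\{y\in P: F\text{ prunes }y\}$, and if $|P'|\ge\gamma|P|$ append $F$ to $\Sigma$, start a new empty $F$ and set $P\leftarrow P\setminus P'$. Final step: append $F$ to $\Sigma$, let $X$ be the best tuples of the nonempty filters in $\Sigma$, and return the best tuple of $X\cup P$ by pairwise comparisons. *)

theory Defs
  imports "HOL-Analysis.Analysis"
begin

text \<open>Tuples are vectors in R^d, rendered as the type real^'d. The utility of x
  w.r.t. the unknown utility vector u is u \<bullet> x. The comparison oracle is
  modelled by comparing utilities directly.\<close>

definition util :: "real^'d \<Rightarrow> real^'d \<Rightarrow> real" where
  "util u x = u \<bullet> x"

text \<open>A filter is a list S = [x_1,...,x_s] sorted by strictly decreasing utility.
  S entails x iff the minimal distance from x to
  x_1 + cone{x_(j+1) - x_j} is at most eps.\<close>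

definition entails :: "real \<Rightarrow> (real^'d) list \<Rightarrow> real^'d \<Rightarrow> bool" where
  "entails eps S x \<longleftrightarrow>
     Inf {norm (x - S!0 - (\<Sum>j<length S - 1. \<alpha> j *\<^sub>R (S!(j+1) - S!j))) | \<alpha>.
            \<forall>j. 0 \<le> \<alpha> j} \<le> eps"

definition prunes :: "real \<Rightarrow> (real^'d) list \<Rightarrow> real^'d \<Rightarrow> bool" where
  "prunes eps S x \<longleftrightarrow> S \<noteq> [] \<and> entails eps S x"

definition filter_add :: "real^'d \<Rightarrow> real^'d \<Rightarrow> (real^'d) list \<Rightarrow> (real^'d) list" where
  "filter_add u x S = insort_key (\<lambda>y. - util u y) x S"

definition filter_best :: "(real^'d) list \<Rightarrow> real^'d" where
  "filter_best S = hd S"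

text \<open>Algorithm state: (current filter F, sequence Sigma of filters, pool P).\<close>

type_synonym 'd state = "(real^'d) list \<times> (real^'d) list list \<times> (real^'d) set"

definition step :: "real \<Rightarrow> real^'d \<Rightarrow> nat \<Rightarrow> real \<Rightarrow> real^'d \<Rightarrow> 'd state \<Rightarrow> 'd state" where
  "step eps u m \<gamma> x st =
     (case st of (F, Sig, P) \<Rightarrow>
       if \<exists>G\<in>set Sig. prunes eps G x then (F, Sig, P)
       else if card P < m then (F, Sig, insert x P)
       else (let F' = filter_add u x F; P' = {y\<in>P. prunes eps F' y}
             in if real (card P') \<ge> \<gamma> * real (card P)
                then ([], Sig @ [F'], P - P')
                else (F', Sig, P)))"

definition run :: "real \<Rightarrow> real^'d \<Rightarrow> nat \<Rightarrow> real \<Rightarrow> (real^'d) list \<Rightarrow> 'd state" where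
  "run eps u m \<gamma> xs = fold (step eps u m \<gamma>) xs ([], [], {})"

definition final_output :: "real^'d \<Rightarrow> 'd state \<Rightarrow> real^'d" where
  "final_output u st =
     (case st of (F, Sig, P) \<Rightarrow>
        let X = {filter_best G | G. G \<in> set (Sig @ [F]) \<and> G \<noteq> []}
        in ARG_MAX (util u) y. y \<in> X \<union> P)"

definition algorithm :: "real \<Rightarrow> real^'d \<Rightarrow> nat \<Rightarrow> real \<Rightarrow> (real^'d) list \<Rightarrow> real^'d" where
  "algorithm eps u m \<gamma> xs = final_output u (run eps u m \<gamma> xs)"

end

theory Submission
  imports Defs
begin

lemma argmax_fin:
  fixes f :: "'a \<Rightarrow> real"
  assumes "finite S" "S \<noteq> {}"
  shows "arg_max f (\<lambda>y. y \<in> S) \<in> S \<and> (\<forall>z\<in>S. f z \<le> f (arg_max f (\<lambda>y. y \<in> S)))"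
proof -
  have "Max (f ` S) \<in> f ` S" using assms by simp
  then obtain x where x: "x \<in> S" "f x = Max (f ` S)" by auto
  have xm: "\<forall>z\<in>S. f z \<le> f x" using x assms by auto
  show ?thesis
    apply (rule arg_maxI[where P="\<lambda>y. y \<in> S" and f=f and x=x])
    using x xm by (auto simp: not_less)
qed

lemma sorted_hd:
  assumes "sorted (map (\<lambda>y. - util u y) G)" "x \<in> set G"
  shows "util u x \<le> util u (hd G)"
  using assms by (cases G) auto

lemma entails_bound:
  fixes u :: "real^'d"
  assumes nu: "norm u = 1" and S: "S \<noteq> []"
    and sorted: "sorted (map (\<lambda>y. - util u y) S)"
    and ent: "entails eps S x"
  shows "util u x \<le> util u (hd S) + eps"
proof (rule ccontr)
  assume "\<not> ?thesis"
  then have lt: "eps < util u x - util u (hd S)" by simp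
  let ?A = "{norm (x - S!0 - (\<Sum>j<length S - 1. \<alpha> j *\<^sub>R (S!(j+1) - S!j))) | \<alpha>.
            \<forall>j. 0 \<le> \<alpha> j}"
  have ne: "?A \<noteq> {}" by blast
  have "Inf ?A < util u x - util u (hd S)" using ent lt unfolding entails_def by simp
  then obtain \<alpha> where a: "\<forall>j. 0 \<le> \<alpha> j"
    and lt2: "norm (x - S!0 - (\<Sum>j<length S - 1. \<alpha> j *\<^sub>R (S!(j+1) - S!j))) < util u x - util u (hd S)"
    using cInf_lessD[OF ne] by blast
  define p where "p = S!0 + (\<Sum>j<length S - 1. \<alpha> j *\<^sub>R (S!(j+1) - S!j))"
  have mono: "util u (S!(j+1)) \<le> util u (S!j)" if "j < length S - 1" for j
  proof -
    have "(map (\<lambda>y. - util u y) S) ! j \<le> (map (\<lambda>y. - util u y) S) ! (j+1)"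
      using sorted that by (intro sorted_nth_mono) auto
    then show ?thesis using that by simp
  qed
  have "u \<bullet> p = u \<bullet> S!0 + (\<Sum>j<length S - 1. \<alpha> j * (util u (S!(j+1)) - util u (S!j)))"
    unfolding p_def util_def by (simp add: inner_add_right inner_sum_right inner_diff_right inner_scaleR_right)
  also have "\<dots> \<le> u \<bullet> S!0 + 0"
  proof -
    have "(\<Sum>j<length S - 1. \<alpha> j * (util u (S!(j+1)) - util u (S!j))) \<le> (\<Sum>j<length S - 1. 0)"
      by (rule sum_mono) (use a mono in \<open>auto intro: mult_nonneg_nonpos\<close>)
    then show ?thesis by simp
  qed
  finally have up: "u \<bullet> p \<le> util u (hd S)" using S by (simp add: util_def hd_conv_nth)
  have "u \<bullet> (x - p) \<le> norm u * norm (x - p)" by (rule norm_cauchy_schwarz)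
  then have "u \<bullet> x - u \<bullet> p \<le> norm (x - p)" using nu by (simp add: inner_diff_right)
  moreover have "norm (x - p) < util u x - util u (hd S)" using lt2 unfolding p_def by (simp add: algebra_simps)
  ultimately show False using up by (simp add: util_def)
qed

definition Inv :: "real \<Rightarrow> real^'d \<Rightarrow> (real^'d) set \<Rightarrow> 'd state \<Rightarrow> bool" where
  "Inv eps u A st = (case st of (F, Sig, P) \<Rightarrow>
     P \<subseteq> A \<and> finite P \<and>
     (\<forall>G\<in>set (Sig @ [F]). set G \<subseteq> A \<and> sorted (map (\<lambda>y. - util u y) G)) \<and>
     (\<forall>x\<in>A. x \<in> P \<or> (\<exists>G\<in>set (Sig @ [F]). x \<in> set G) \<or> (\<exists>G\<in>set Sig. prunes eps G x)))"

lemma Inv_step: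
  assumes "Inv eps u A st"
  shows "Inv eps u (insert x A) (step eps u m \<gamma> x st)"
proof -
  obtain F Sig P where st: "st = (F, Sig, P)" by (cases st) auto
  have I1: "P \<subseteq> A" and I2: "finite P"
    and I3: "\<forall>G\<in>set (Sig @ [F]). set G \<subseteq> A \<and> sorted (map (\<lambda>y. - util u y) G)"
    and I4: "\<forall>x\<in>A. x \<in> P \<or> (\<exists>G\<in>set (Sig @ [F]). x \<in> set G) \<or> (\<exists>G\<in>set Sig. prunes eps G x)"
    using assms unfolding st Inv_def by simp_all
  show ?thesis
  proof (cases "\<exists>G\<in>set Sig. prunes eps G x")
    case True
    have e: "step eps u m \<gamma> x st = (F, Sig, P)" using True unfolding st step_def by simp
    show ?thesis unfolding e Inv_def prod.case
    proof (intro conjI)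
      show "P \<subseteq> insert x A" using I1 by blast
      show "finite P" by fact
      show "\<forall>G\<in>set (Sig @ [F]). set G \<subseteq> insert x A \<and> sorted (map (\<lambda>y. - util u y) G)"
        using I3 by blast
      show "\<forall>y\<in>insert x A. y \<in> P \<or> (\<exists>G\<in>set (Sig @ [F]). y \<in> set G) \<or> (\<exists>G\<in>set Sig. prunes eps G y)"
        using I4 True by blast
    qed
  next
    case nP: False
    show ?thesis
    proof (cases "card P < m")
      case True
      have e: "step eps u m \<gamma> x st = (F, Sig, insert x P)" using True nP unfolding st step_def by simp
      show ?thesis unfolding e Inv_def prod.case
      proof (intro conjI)
        show "insert x P \<subseteq> insert x A" using I1 by blast
        show "finite (insert x P)" using I2 by simp
        show "\<forall>G\<in>set (Sig @ [F]). set G \<subseteq> insert x A \<and> sorted (map (\<lambda>y. - util u y) G)"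
          using I3 by blast
        show "\<forall>y\<in>insert x A. y \<in> insert x P \<or> (\<exists>G\<in>set (Sig @ [F]). y \<in> set G) \<or> (\<exists>G\<in>set Sig. prunes eps G y)"
          using I4 by blast
      qed
    next
      case nm: False
      define F' where "F' = filter_add u x F"
      define P' where "P' = {y\<in>P. prunes eps F' y}"
      have sF': "set F' = insert x (set F)" unfolding F'_def filter_add_def by (simp add: set_insort_key)
      have soF': "sorted (map (\<lambda>y. - util u y) F')"
        using I3 unfolding F'_def filter_add_def by (simp add: sorted_insort_key)
      have sFA: "set F \<subseteq> A" using I3 by simp
      show ?thesis
      proof (cases "real (card P') \<ge> \<gamma> * real (card P)")
        case True
        have e: "step eps u m \<gamma> x st = ([], Sig @ [F'], P - P')"
          using nP nm True unfolding st step_def F'_def P'_def Let_def by simp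
        show ?thesis unfolding e Inv_def prod.case
        proof (intro conjI)
          show "P - P' \<subseteq> insert x A" using I1 by blast
          show "finite (P - P')" using I2 by simp
          show "\<forall>G\<in>set ((Sig @ [F']) @ [[]]). set G \<subseteq> insert x A \<and> sorted (map (\<lambda>y. - util u y) G)"
            using I3 sF' soF' sFA by auto
          show "\<forall>y\<in>insert x A. y \<in> P - P' \<or> (\<exists>G\<in>set ((Sig @ [F']) @ [[]]). y \<in> set G) \<or> (\<exists>G\<in>set (Sig @ [F']). prunes eps G y)"
          proof
            fix y assume y: "y \<in> insert x A"
            show "y \<in> P - P' \<or> (\<exists>G\<in>set ((Sig @ [F']) @ [[]]). y \<in> set G) \<or> (\<exists>G\<in>set (Sig @ [F']). prunes eps G y)"
            proof (cases "y = x")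
              case True then show ?thesis using sF' by simp
            next
              case False
              then have "y \<in> A" using y by simp
              then consider "y \<in> P" | "\<exists>G\<in>set (Sig @ [F]). y \<in> set G" | "\<exists>G\<in>set Sig. prunes eps G y"
                using I4 by blast
              then show ?thesis
              proof cases
                case 1 then show ?thesis unfolding P'_def by auto
              next
                case 2 then show ?thesis using sF' by auto
              next
                case 3 then show ?thesis by auto
              qed
            qed
          qed
        qed
      next
        case False
        have e: "step eps u m \<gamma> x st = (F', Sig, P)"
          using nP nm False unfolding st step_def F'_def P'_def Let_def by simp
        show ?thesis unfolding e Inv_def prod.case
        proof (intro conjI)
          show "P \<subseteq> insert x A" using I1 by blast
          show "finite P" by fact
          show "\<forall>G\<in>set (Sig @ [F']). set G \<subseteq> insert x A \<and> sorted (map (\<lambda>y. - util u y) G)"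
            using I3 sF' soF' sFA by auto
          show "\<forall>y\<in>insert x A. y \<in> P \<or> (\<exists>G\<in>set (Sig @ [F']). y \<in> set G) \<or> (\<exists>G\<in>set Sig. prunes eps G y)"
            using I4 sF' by auto
        qed
      qed
    qed
  qed
qed

lemma Inv_run: "Inv eps u (set ys) (run eps u m \<gamma> ys)"
proof (induction ys rule: rev_induct)
  case Nil
  then show ?case unfolding run_def Inv_def by simp
next
  case (snoc y ys)
  then show ?case unfolding run_def using Inv_step[of eps u "set ys" _ y m \<gamma>] by simp
qed

theorem theorem4p3:
  fixes eps \<gamma> :: real and m k :: nat and u :: "real^'d"
    and D :: "(real^'d) set" and xs :: "(real^'d) list" and xstar :: "real^'d"
  assumes "eps > 0"
    and "norm u = 1"
    and "finite D"
    and "\<forall>x\<in>D. norm x \<le> 1"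
    and "inj_on (util u) D"
    and "m \<ge> 1"
    and "distinct xs" and "set xs = D"
    and "1 \<le> k" and "k \<le> length xs"
    and "xstar \<in> set (take k xs)"
    and "\<forall>y\<in>set (take k xs). util u y \<le> util u xstar"
    and "util u xstar \<ge> 0"
  shows "algorithm eps u m \<gamma> (take k xs) \<in> set (take k xs) \<and>
         (util u xstar > 0 \<longrightarrow>
            util u xstar - util u (algorithm eps u m \<gamma> (take k xs))
              \<le> (eps / util u xstar) * util u xstar)"
proof -
  let ?ys = "take k xs"
  let ?A = "set ?ys"
  obtain F Sig P where st: "run eps u m \<gamma> ?ys = (F, Sig, P)" by (cases "run eps u m \<gamma> ?ys") auto
  have I: "P \<subseteq> ?A" "finite P"
     "\<forall>G\<in>set (Sig @ [F]). set G \<subseteq> ?A \<and> sorted (map (\<lambda>y. - util u y) G)"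
     "\<forall>x\<in>?A. x \<in> P \<or> (\<exists>G\<in>set (Sig @ [F]). x \<in> set G) \<or> (\<exists>G\<in>set Sig. prunes eps G x)"
    using Inv_run[of eps u ?ys m \<gamma>] st unfolding Inv_def by auto
  define X where "X = {filter_best G | G. G \<in> set (Sig @ [F]) \<and> G \<noteq> []}"
  define S where "S = X \<union> P"
  have out: "algorithm eps u m \<gamma> ?ys = arg_max (util u) (\<lambda>y. y \<in> S)"
    unfolding algorithm_def st final_output_def S_def X_def by simp
  have finX: "finite X"
  proof -
    have "X \<subseteq> filter_best ` set (Sig @ [F])" unfolding X_def by blast
    then show ?thesis by (rule finite_subset) simp
  qed
  have XA: "X \<subseteq> ?A" unfolding X_def filter_best_def using I(3)
    by (auto intro!: list.set_sel(1)[THEN subsetD[rotated]] dest: bspec)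
  have hdX: "hd G \<in> X" if "G \<in> set (Sig @ [F])" "G \<noteq> []" for G
    unfolding X_def filter_best_def using that by blast
  have case_x: "\<exists>z\<in>S. util u xstar \<le> util u z + eps"
  proof -
    from I(4) assms(11) consider "xstar \<in> P" | "\<exists>G\<in>set (Sig @ [F]). xstar \<in> set G"
      | "\<exists>G\<in>set Sig. prunes eps G xstar" by blast
    then show ?thesis
    proof cases
      case 1 then show ?thesis using assms(1) unfolding S_def by force
    next
      case 2
      then obtain G where G: "G \<in> set (Sig @ [F])" "xstar \<in> set G" by blast
      then have "G \<noteq> []" by auto
      then have "hd G \<in> S" using hdX G unfolding S_def by blast
      moreover have "util u xstar \<le> util u (hd G)" using sorted_hd G I(3) by blast
      ultimately show ?thesis using assms(1) by force
    next
      case 3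
      then obtain G where G: "G \<in> set Sig" "prunes eps G xstar" by blast
      then have ne: "G \<noteq> []" and en: "entails eps G xstar" unfolding prunes_def by auto
      have "hd G \<in> S" using hdX G ne unfolding S_def by auto
      moreover have "util u xstar \<le> util u (hd G) + eps"
        using entails_bound[OF assms(2) ne _ en] I(3) G by auto
      ultimately show ?thesis by blast
    qed
  qed
  have finS: "finite S" "S \<noteq> {}" using finX I(2) case_x unfolding S_def by auto
  note am = argmax_fin[OF finS, of "util u"]
  have mem: "algorithm eps u m \<gamma> ?ys \<in> ?A" using am out XA I(1) unfolding S_def by auto
  have bound: "util u xstar - util u (algorithm eps u m \<gamma> ?ys) \<le> eps"
    using am out case_x by force
  show ?thesis using mem bound by auto
qed

end
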